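(* Let $q\ge 3$ and let $n$ be a positive even integer. There exists a quasi-complementary Lee metric Gray code of $q$-ary $n$-tuples.
   Context: Lee distance between $v,u\in\mathbb{Z}_q^n$ is $\sum_{i}\min\{|v_i-u_i|,q-|v_i-u_i|\}$ (entries regarded as integers in $\{0,\ldots,q-1\}$). A quasi-complementary Lee metric Gray code of $q$-ary $n$-tuples is an ordering $G(0),\ldots,G(q^n-1)$ of all words of $\mathbb{Z}_q^n$ such that consecutive words $G(i),G(i+1)$ ($0\le i<q^n-1$) have Lee distance $1$ and $G((i+q^{n-1})\bmod q^n)=G(i)+(1,1,\ldots,1)$ for all $i$, with addition in $\mathbb{Z}_q^n$. *)

theory Defs
  imports Main
begin

text \<open>Words of Z_q^n are represented as functions nat => nat with entries in {0..<q}
  at positions i < n and value 0 at positions i >= n.\<close>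

definition words :: "nat \<Rightarrow> nat \<Rightarrow> (nat \<Rightarrow> nat) set" where
  "words q n = {v. (\<forall>i<n. v i < q) \<and> (\<forall>i\<ge>n. v i = 0)}"

definition lee_coord :: "nat \<Rightarrow> nat \<Rightarrow> nat \<Rightarrow> nat" where
  "lee_coord q a b = (let d = (if a \<ge> b then a - b else b - a) in min d (q - d))"

definition lee_dist :: "nat \<Rightarrow> nat \<Rightarrow> (nat \<Rightarrow> nat) \<Rightarrow> (nat \<Rightarrow> nat) \<Rightarrow> nat" where
  "lee_dist q n v u = (\<Sum>i<n. lee_coord q (v i) (u i))"

definition add_ones :: "nat \<Rightarrow> nat \<Rightarrow> (nat \<Rightarrow> nat) \<Rightarrow> (nat \<Rightarrow> nat)" where
  "add_ones q n v = (\<lambda>i. if i < n then (v i + 1) mod q else 0)"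

definition quasi_complementary_lee_gray_code ::
  "nat \<Rightarrow> nat \<Rightarrow> (nat \<Rightarrow> nat \<Rightarrow> nat) \<Rightarrow> bool" where
  "quasi_complementary_lee_gray_code q n G \<longleftrightarrow>
     bij_betw G {..<q ^ n} (words q n) \<and>
     (\<forall>i. i + 1 < q ^ n \<longrightarrow> lee_dist q n (G i) (G (i + 1)) = 1) \<and>
     (\<forall>i<q ^ n. G ((i + q ^ (n - 1)) mod q ^ n) = add_ones q n (G i))"

end

theory Submission
  imports Defs
begin

definition zq :: "nat \<Rightarrow> int \<Rightarrow> nat" where "zq q x = nat (x mod int q)"

lemma zq_lt: "q > 0 \<Longrightarrow> zq q x < q"
  unfolding zq_def by (simp add: nat_less_iff)

lemma zq_cong: "x mod int q = y mod int q \<Longrightarrow> zq q x = zq q y"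
  unfolding zq_def by simp

lemma zq_addq: "zq q (x + int q) = zq q x"
  unfolding zq_def by simp

lemma zq_suc: "q > 0 \<Longrightarrow> (zq q x + 1) mod q = zq q (x + 1)"
proof -
  assume q: "q > 0"
  have "int ((zq q x + 1) mod q) = (x mod int q + 1) mod int q"
    unfolding zq_def using q by (simp add: zmod_int add.commute)
  also have "\<dots> = (x + 1) mod int q" by (simp add: mod_add_left_eq)
  finally show ?thesis unfolding zq_def by simp
qed

lemma lee_same: "lee_coord q a a = 0"
  unfolding lee_coord_def by simp

lemma lee_one: assumes "q \<ge> 2" shows "lee_coord q (zq q x) (zq q (x + 1)) = 1 \<and> lee_coord q (zq q (x + 1)) (zq q x) = 1"
proof -
  have q0: "q > 0" using assms by simp
  have b: "zq q (x+1) = (zq q x + 1) mod q" using zq_suc[OF q0] by simp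
  have a: "zq q x < q" using zq_lt[OF q0] .
  show ?thesis
  proof (cases "zq q x + 1 = q")
    case True
    then have "zq q (x+1) = 0" using b by simp
    then show ?thesis using True assms unfolding lee_coord_def Let_def by auto
  next
    case False
    then have "zq q (x+1) = zq q x + 1" using b a by simp
    then show ?thesis using False assms unfolding lee_coord_def Let_def by auto
  qed
qed

lemma lee_dist_SS: "lee_dist q (Suc (Suc n)) v u = lee_dist q n v u + lee_coord q (v n) (u n) + lee_coord q (v (Suc n)) (u (Suc n))"
  unfolding lee_dist_def by simp

lemma lee_dist_cong: "(\<And>p. p < n \<Longrightarrow> v p = v' p) \<Longrightarrow> (\<And>p. p < n \<Longrightarrow> u p = u' p) \<Longrightarrow> lee_dist q n v u = lee_dist q n v' u'"
  unfolding lee_dist_def by (intro sum.cong) auto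

lemma lee_dist_same: "lee_dist q n v v = 0"
  unfolding lee_dist_def by (simp add: lee_same)

lemma card_words: "q > 0 \<Longrightarrow> card (words q m) = q ^ m"
proof (induction m)
  case 0
  have "words q 0 = {\<lambda>_. 0}" unfolding words_def by auto
  then show ?case by simp
next
  case (Suc m)
  have eq: "words q (Suc m) = (\<lambda>(v,a). v(m := a)) ` (words q m \<times> {..<q})"
  proof
    show "words q (Suc m) \<subseteq> (\<lambda>(v,a). v(m := a)) ` (words q m \<times> {..<q})"
    proof
      fix w assume w: "w \<in> words q (Suc m)"
      have "w = (\<lambda>(v,a). v(m := a)) (w(m := 0), w m)" by auto
      moreover have "(w(m := 0), w m) \<in> words q m \<times> {..<q}"
        using w unfolding words_def by auto
      ultimately show "w \<in> (\<lambda>(v,a). v(m := a)) ` (words q m \<times> {..<q})" by blast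
    qed
  next
    show "(\<lambda>(v,a). v(m := a)) ` (words q m \<times> {..<q}) \<subseteq> words q (Suc m)"
      unfolding words_def by auto
  qed
  have inj: "inj_on (\<lambda>(v,a). v(m := a)) (words q m \<times> {..<q})"
  proof (rule inj_onI, clarify)
    fix v a v' a'
    assume "v \<in> words q m" "v' \<in> words q m" "v(m := a) = v'(m := a')"
    then show "v = v' \<and> a = a'"
    proof -
      assume vw: "v \<in> words q m" "v' \<in> words q m" and e: "v(m := a) = v'(m := a')"
      have aa: "a = a'" using fun_cong[OF e, of m] by simp
      have "v x = v' x" for x
      proof (cases "x = m")
        case True
        then show ?thesis using vw unfolding words_def by simp
      next
        case False
        then show ?thesis using fun_cong[OF e, of x] by simp
      qed
      then show ?thesis using aa by auto
    qed
  qed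
  show ?case using Suc by (simp add: eq card_image[OF inj] card_cartesian_product)
qed


lemma zq_eq_iff: assumes "q > 0" shows "zq q x = zq q y \<longleftrightarrow> x mod int q = y mod int q"
  unfolding zq_def using assms by (simp add: eq_nat_nat_iff)

lemma lee_adj:
  assumes "q \<ge> 2" "y mod int q = (x + 1) mod int q \<or> x mod int q = (y + 1) mod int q"
  shows "lee_coord q (zq q x) (zq q y) = 1"
  using assms(2)
proof
  assume "y mod int q = (x + 1) mod int q"
  then have "zq q y = zq q (x+1)" by (rule zq_cong)
  then show ?thesis using lee_one[OF assms(1)] by simp
next
  assume "x mod int q = (y + 1) mod int q"
  then have "zq q x = zq q (y+1)" by (rule zq_cong)
  then show ?thesis using lee_one[OF assms(1)] by simp
qed

lemma lee_eqm: "x mod int q = y mod int q \<Longrightarrow> lee_coord q (zq q x) (zq q y) = 0"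
  using zq_cong lee_same by metis

definition hA :: "nat \<Rightarrow> nat \<Rightarrow> int \<times> int" where
  "hA q s = (int (s div q) - int (s mod q), int (s div q))"

definition rA :: "nat \<Rightarrow> nat \<Rightarrow> int \<times> int" where
  "rA q s = (- snd (hA q s), fst (hA q s))"

lemma hA_step: assumes "q > 0"
  shows "hA q (Suc s) = (fst (hA q s) - 1, snd (hA q s)) \<or>
         hA q (Suc s) = (fst (hA q s) + int q, snd (hA q s) + 1)"
proof (cases "Suc s mod q = 0")
  case True
  then have "Suc (s mod q) = q" using assms by (metis mod_Suc nat.distinct(1))
  then have "s mod q = q - 1" by simp
  then show ?thesis using True assms unfolding hA_def by (simp add: div_Suc of_nat_diff)
next
  case False
  then have "Suc (s mod q) \<noteq> q" using assms by (metis mod_Suc mod_self)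
  then have "Suc s mod q = Suc (s mod q)" by (simp add: mod_Suc)
  then show ?thesis using False assms unfolding hA_def by (simp add: div_Suc)
qed

lemma hA_0: "hA q 0 = (0, 0)" unfolding hA_def by simp
lemma rA_0: "rA q 0 = (0, 0)" unfolding rA_def hA_def by simp

lemma hA_last: assumes "q > 0" shows "hA q (q^2 - 1) = (0, int q - 1)"
proof -
  have e: "q^2 - 1 = (q - 1) + (q - 1) * q" using assms by (simp add: power2_eq_square algebra_simps)
  have "(q - 1 + (q - 1) * q) div q = q - 1" by (subst div_mult_self1) (use assms in auto)
  moreover have "(q - 1 + (q - 1) * q) mod q = q - 1" by (subst mod_mult_self1) (use assms in auto)
  ultimately have "(q^2 - 1) div q = q - 1" "(q^2 - 1) mod q = q - 1" unfolding e by simp_all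
  then show ?thesis unfolding hA_def using assms by (simp add: of_nat_diff)
qed

lemma rA_last: assumes "q > 0" shows "rA q (q^2 - 1) = (1 - int q, 0)"
  using hA_last[OF assms] unfolding rA_def by simp

lemma small_inj: fixes c d d' :: int
  assumes "0 \<le> d" "d < int q" "0 \<le> d'" "d' < int q" "(c + d) mod int q = (c + d') mod int q"
  shows "d = d'"
proof -
  have "(c + d - c) mod int q = (c + d' - c) mod int q" using assms(5) by (rule mod_diff_cong) simp
  then show ?thesis using assms by simp
qed

lemma hA_inj: assumes q: "q > 0" and s: "s < q^2" "s' < q^2"
  and e0: "(c0 + fst (hA q s)) mod int q = (c0 + fst (hA q s')) mod int q"
  and e1: "(c1 + snd (hA q s)) mod int q = (c1 + snd (hA q s')) mod int q"
  shows "s = s'"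
proof -
  have d: "s div q < q" "s' div q < q" using s q by (simp_all add: power2_eq_square less_mult_imp_div_less)
  have "int (s div q) = int (s' div q)"
    using small_inj[of "int (s div q)" q "int (s' div q)" c1] e1 d unfolding hA_def by simp
  then have dd: "s div q = s' div q" by simp
  have "(- (c0 + fst (hA q s))) mod int q = (- (c0 + fst (hA q s'))) mod int q"
    using e0 by (rule mod_minus_cong)
  then have "(- (c0 + int (s div q)) + int (s mod q)) mod int q = (- (c0 + int (s div q)) + int (s' mod q)) mod int q"
    unfolding hA_def using dd by (simp add: algebra_simps)
  then have "int (s mod q) = int (s' mod q)"
    using small_inj[of "int (s mod q)" q "int (s' mod q)" "- (c0 + int (s div q))"] q by simp
  then have "s mod q = s' mod q" by simp
  then show ?thesis using dd by (metis div_mod_decomp)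
qed


lemma pair_step:
  assumes q: "q \<ge> 2"
    and h: "((y0 mod int q = (x0 + 1) mod int q \<or> x0 mod int q = (y0 + 1) mod int q) \<and> x1 mod int q = y1 mod int q)
       \<or> (x0 mod int q = y0 mod int q \<and> (y1 mod int q = (x1 + 1) mod int q \<or> x1 mod int q = (y1 + 1) mod int q))"
  shows "lee_coord q (zq q x0) (zq q y0) + lee_coord q (zq q x1) (zq q y1) = 1"
  using h lee_adj[OF q] lee_eqm by auto

lemma hA_pair: assumes "q \<ge> 2"
  shows "lee_coord q (zq q (c0 + fst (hA q s))) (zq q (c0 + fst (hA q (Suc s)))) +
         lee_coord q (zq q (c1 + snd (hA q s))) (zq q (c1 + snd (hA q (Suc s)))) = 1"
proof (rule pair_step[OF assms])
  have "q > 0" using assms by simp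
  from hA_step[OF this, of s] show "((c0 + fst (hA q (Suc s))) mod int q = (c0 + fst (hA q s) + 1) mod int q \<or>
     (c0 + fst (hA q s)) mod int q = (c0 + fst (hA q (Suc s)) + 1) mod int q) \<and>
    (c1 + snd (hA q s)) mod int q = (c1 + snd (hA q (Suc s))) mod int q \<or>
    (c0 + fst (hA q s)) mod int q = (c0 + fst (hA q (Suc s))) mod int q \<and>
    ((c1 + snd (hA q (Suc s))) mod int q = (c1 + snd (hA q s) + 1) mod int q \<or>
     (c1 + snd (hA q s)) mod int q = (c1 + snd (hA q (Suc s)) + 1) mod int q)"
  proof
    assume "hA q (Suc s) = (fst (hA q s) - 1, snd (hA q s))"
    then show ?thesis by simp
  next
    assume "hA q (Suc s) = (fst (hA q s) + int q, snd (hA q s) + 1)"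
    then show ?thesis by (simp add: add.assoc[symmetric])
  qed
qed

lemma rA_pair: assumes "q \<ge> 2"
  shows "lee_coord q (zq q (c0 + fst (rA q s))) (zq q (c0 + fst (rA q (Suc s)))) +
         lee_coord q (zq q (c1 + snd (rA q s))) (zq q (c1 + snd (rA q (Suc s)))) = 1"
proof (rule pair_step[OF assms])
  have "q > 0" using assms by simp
  from hA_step[OF this, of s] show "((c0 + fst (rA q (Suc s))) mod int q = (c0 + fst (rA q s) + 1) mod int q \<or>
     (c0 + fst (rA q s)) mod int q = (c0 + fst (rA q (Suc s)) + 1) mod int q) \<and>
    (c1 + snd (rA q s)) mod int q = (c1 + snd (rA q (Suc s))) mod int q \<or>
    (c0 + fst (rA q s)) mod int q = (c0 + fst (rA q (Suc s))) mod int q \<and>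
    ((c1 + snd (rA q (Suc s))) mod int q = (c1 + snd (rA q s) + 1) mod int q \<or>
     (c1 + snd (rA q s)) mod int q = (c1 + snd (rA q (Suc s)) + 1) mod int q)"
  proof
    assume "hA q (Suc s) = (fst (hA q s) - 1, snd (hA q s))"
    then show ?thesis unfolding rA_def by simp
  next
    assume "hA q (Suc s) = (fst (hA q s) + int q, snd (hA q s) + 1)"
    then have a: "fst (rA q (Suc s)) = fst (rA q s) - 1" "snd (rA q (Suc s)) = snd (rA q s) + int q"
      unfolding rA_def by simp_all
    have "(c0 + fst (rA q s)) mod int q = (c0 + fst (rA q (Suc s)) + 1) mod int q" using a by simp
    moreover have "(c1 + snd (rA q s)) mod int q = (c1 + snd (rA q (Suc s))) mod int q"
      using a by (simp add: add.assoc[symmetric])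
    ultimately show ?thesis by blast
  qed
qed

lemma zq_shift: "q > 0 \<Longrightarrow> x' mod int q = (x + 1) mod int q \<Longrightarrow> zq q x' = (zq q x + 1) mod q"
  using zq_cong zq_suc by metis

lemma qc_intro:
  assumes q: "q > 0"
    and w: "\<And>j. j < q^n \<Longrightarrow> G j \<in> words q n"
    and inj: "inj_on G {..<q^n}"
    and st: "\<And>j. Suc j < q^n \<Longrightarrow> lee_dist q n (G j) (G (Suc j)) = 1"
    and sh: "\<And>j. j < q^n \<Longrightarrow> G ((j + q^(n-1)) mod q^n) = add_ones q n (G j)"
  shows "quasi_complementary_lee_gray_code q n G"
proof -
  have fin: "finite (words q n)" using card_words[OF q, of n] q
    by (metis card_ge_0_finite zero_less_power)
  have sub: "G ` {..<q^n} \<subseteq> words q n" using w by auto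
  have "card (G ` {..<q^n}) = card (words q n)"
    using card_image[OF inj] card_words[OF q] by simp
  then have "G ` {..<q^n} = words q n" using card_subset_eq[OF fin sub] by simp
  then have "bij_betw G {..<q^n} (words q n)" using inj unfolding bij_betw_def by simp
  then show ?thesis unfolding quasi_complementary_lee_gray_code_def using st sh by simp
qed

definition code0 :: "nat \<Rightarrow> nat \<Rightarrow> nat \<Rightarrow> nat" where
  "code0 q j = (\<lambda>p. if p = 0 then zq q (fst (hA q j)) else if p = 1 then zq q (snd (hA q j)) else 0)"

lemma code0_qc: assumes q: "q \<ge> 3" shows "quasi_complementary_lee_gray_code q 2 (code0 q)"
proof (rule qc_intro)
  show q0: "q > 0" using q by simp
  show "\<And>j. j < q^2 \<Longrightarrow> code0 q j \<in> words q 2"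
    unfolding words_def code0_def using zq_lt[OF q0] by auto
  show "inj_on (code0 q) {..<q^2}"
  proof (rule inj_onI)
    fix j j' assume j: "j \<in> {..<q^2}" "j' \<in> {..<q^2}" and e: "code0 q j = code0 q j'"
    have "code0 q j 0 = code0 q j' 0" "code0 q j 1 = code0 q j' 1" using e by simp_all
    then have "zq q (0 + fst (hA q j)) = zq q (0 + fst (hA q j'))" "zq q (0 + snd (hA q j)) = zq q (0 + snd (hA q j'))"
      unfolding code0_def by simp_all
    then show "j = j'" using hA_inj[OF q0, of j j' 0 0] j unfolding zq_eq_iff[OF q0] by simp
  qed
  show "\<And>j. Suc j < q^2 \<Longrightarrow> lee_dist q 2 (code0 q j) (code0 q (Suc j)) = 1"
  proof -
    fix j
    have "lee_dist q 2 (code0 q j) (code0 q (Suc j)) = lee_dist q (Suc (Suc 0)) (code0 q j) (code0 q (Suc j))"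
      by (simp add: numeral_2_eq_2)
    also have "\<dots> = 1" unfolding lee_dist_SS using hA_pair[of q 0 j 0] q
      by (simp add: code0_def lee_dist_def)
    finally show "lee_dist q 2 (code0 q j) (code0 q (Suc j)) = 1" .
  qed
  show "\<And>j. j < q^2 \<Longrightarrow> code0 q ((j + q^(2-1)) mod q^2) = add_ones q 2 (code0 q j)"
  proof -
    fix j assume j: "j < q^2"
    define j' where "j' = (j + q) mod q^2"
    have "j' = q * ((j + q) div q mod q) + (j + q) mod q" unfolding j'_def
      by (simp add: power2_eq_square mod_mult2_eq)
    also have "\<dots> = q * ((j div q + 1) mod q) + j mod q" using q0 by (simp add: div_add_self2)
    finally have je: "j' = q * ((j div q + 1) mod q) + j mod q" .
    have d: "j' div q = (j div q + 1) mod q" and m: "j' mod q = j mod q" unfolding je using q0 by simp_all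
    have h0: "fst (hA q j') mod int q = (fst (hA q j) + 1) mod int q"
    proof -
      have "fst (hA q j') = (int (j div q) + 1) mod int q - int (j mod q)"
        unfolding hA_def d m by (simp add: zmod_int add.commute)
      then have "fst (hA q j') mod int q = ((int (j div q) + 1) mod int q - int (j mod q)) mod int q" by simp
      also have "\<dots> = (int (j div q) + 1 - int (j mod q)) mod int q" by (rule mod_diff_left_eq)
      also have "\<dots> = (fst (hA q j) + 1) mod int q" unfolding hA_def by (simp add: algebra_simps)
      finally show ?thesis .
    qed
    have h1: "snd (hA q j') mod int q = (snd (hA q j) + 1) mod int q"
      unfolding hA_def d by (simp add: zmod_int add.commute)
    have jj: "(j + q^(2-1)) mod q^2 = j'" by (simp add: j'_def)
    show "code0 q ((j + q^(2-1)) mod q^2) = add_ones q 2 (code0 q j)"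
    proof (rule ext)
      fix p
      show "code0 q ((j + q^(2-1)) mod q^2) p = add_ones q 2 (code0 q j) p"
        unfolding jj using zq_shift[OF q0 h0] zq_shift[OF q0 h1]
        by (cases "p = 0"; cases "p = 1") (simp_all add: code0_def add_ones_def)
    qed
  qed
qed


definition yA :: "nat \<Rightarrow> nat \<Rightarrow> nat \<Rightarrow> int \<times> int" where
  "yA q n i = (int (i div q^(n-1)), int (i div q^(n-1)) - int i)"

definition selA :: "nat \<Rightarrow> nat \<Rightarrow> nat \<Rightarrow> nat \<Rightarrow> int \<times> int" where
  "selA q n i s = (if Suc i mod q^(n-1) = 0 then rA q s else hA q s)"

definition extc :: "nat \<Rightarrow> nat \<Rightarrow> (nat \<Rightarrow> nat \<Rightarrow> nat) \<Rightarrow> nat \<Rightarrow> nat \<Rightarrow> nat" where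
  "extc q n G j = (\<lambda>p. if p < n then G (j div q^2) p
      else if p = n then zq q (fst (yA q n (j div q^2)) + fst (selA q n (j div q^2) (j mod q^2)))
      else if p = Suc n then zq q (snd (yA q n (j div q^2)) + snd (selA q n (j div q^2) (j mod q^2)))
      else 0)"

lemma words_eqI: "v \<in> words q n \<Longrightarrow> u \<in> words q n \<Longrightarrow> (\<And>p. p < n \<Longrightarrow> v p = u p) \<Longrightarrow> v = u"
proof (rule ext)
  fix p assume "v \<in> words q n" "u \<in> words q n" "\<And>p. p < n \<Longrightarrow> v p = u p"
  then show "v p = u p" unfolding words_def by (cases "p < n") auto
qed

lemma cong3: fixes a b a2 b2 c :: int
  assumes "a mod m = a2 mod m" "b mod m = b2 mod m"
  shows "(a - b + c) mod m = (a2 - b2 + c) mod m"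
proof -
  have "(a - b) mod m = (a2 - b2) mod m" by (rule mod_diff_cong[OF assms])
  then show ?thesis by (rule mod_add_cong) simp
qed

lemma ext_qc:
  assumes q: "q \<ge> 3" and n: "n \<ge> 2" and G: "quasi_complementary_lee_gray_code q n G"
  shows "quasi_complementary_lee_gray_code q (Suc (Suc n)) (extc q n G)"
proof (rule qc_intro)
  show q0: "q > 0" using q by simp
  define Q where "Q = q^(n-1)"
  have Q0: "Q > 0" unfolding Q_def using q0 by simp
  define m where "m = n - 2"
  have m: "n = Suc (Suc m)" using n unfolding m_def by simp
  have Qm: "Q = q * q^m" unfolding Q_def m by simp
  have qn: "q^n = q * Q" unfolding Qm m by simp
  have qSn: "q^(Suc n) = Q * q^2" unfolding Qm m by (simp add: power2_eq_square)
  have qSSn: "q^(Suc (Suc n)) = q^2 * q^n" by (simp add: power2_eq_square)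
  have qdvdQ: "q dvd Q" unfolding Qm by simp
  have bijG: "bij_betw G {..<q^n} (words q n)"
    and stG: "\<And>i. i + 1 < q^n \<Longrightarrow> lee_dist q n (G i) (G (i + 1)) = 1"
    and shG: "\<And>i. i < q^n \<Longrightarrow> G ((i + q^(n-1)) mod q^n) = add_ones q n (G i)"
    using G unfolding quasi_complementary_lee_gray_code_def by auto
  have Gw: "\<And>i. i < q^n \<Longrightarrow> G i \<in> words q n" using bijG bij_betwE by blast
  have Ginj: "inj_on G {..<q^n}" using bijG bij_betw_def by blast
  have q2: "q \<ge> 2" using q by simp
  have jdiv: "\<And>j. j < q^(Suc (Suc n)) \<Longrightarrow> j div q^2 < q^n"
    unfolding qSSn by (simp add: less_mult_imp_div_less mult.commute)
  have jmod: "\<And>j. j mod q^2 < q^2" using q0 by simp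
  show "\<And>j. j < q^(Suc (Suc n)) \<Longrightarrow> extc q n G j \<in> words q (Suc (Suc n))"
  proof -
    fix j assume j: "j < q^(Suc (Suc n))"
    have "G (j div q^2) \<in> words q n" using Gw jdiv[OF j] .
    then show "extc q n G j \<in> words q (Suc (Suc n))"
      unfolding words_def extc_def using zq_lt[OF q0] by auto
  qed
  show "inj_on (extc q n G) {..<q^(Suc (Suc n))}"
  proof (rule inj_onI)
    fix j j' assume j: "j \<in> {..<q^(Suc (Suc n))}" and j': "j' \<in> {..<q^(Suc (Suc n))}"
      and e: "extc q n G j = extc q n G j'"
    define i where "i = j div q^2"
    define i' where "i' = j' div q^2"
    define s where "s = j mod q^2"
    define s' where "s' = j' mod q^2"
    have ii: "i < q^n" "i' < q^n" using jdiv j j' unfolding i_def i'_def by auto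
    have "\<And>p. p < n \<Longrightarrow> G i p = G i' p"
    proof -
      fix p assume "p < n"
      then show "G i p = G i' p" using fun_cong[OF e, of p] unfolding extc_def i_def i'_def by simp
    qed
    then have "G i = G i'" using words_eqI Gw ii by blast
    then have iei: "i = i'" using Ginj ii by (meson inj_onD lessThan_iff)
    have en: "zq q (fst (yA q n i) + fst (selA q n i s)) = zq q (fst (yA q n i) + fst (selA q n i s'))"
      using fun_cong[OF e, of n] iei unfolding extc_def i_def i'_def s_def s'_def by simp
    have en1: "zq q (snd (yA q n i) + snd (selA q n i s)) = zq q (snd (yA q n i) + snd (selA q n i s'))"
      using fun_cong[OF e, of "Suc n"] iei unfolding extc_def i_def i'_def s_def s'_def by simp
    have ss: "s < q^2" "s' < q^2" unfolding s_def s'_def using jmod by auto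
    have "s = s'"
    proof (cases "Suc i mod q^(n-1) = 0")
      case True
      then have a: "(fst (yA q n i) - snd (hA q s)) mod int q = (fst (yA q n i) - snd (hA q s')) mod int q"
        and b: "(snd (yA q n i) + fst (hA q s)) mod int q = (snd (yA q n i) + fst (hA q s')) mod int q"
        using en en1 unfolding selA_def rA_def zq_eq_iff[OF q0] by simp_all
      have "(- (fst (yA q n i) - snd (hA q s))) mod int q = (- (fst (yA q n i) - snd (hA q s'))) mod int q"
        using a by (rule mod_minus_cong)
      then have a': "(- fst (yA q n i) + snd (hA q s)) mod int q = (- fst (yA q n i) + snd (hA q s')) mod int q"
        by simp
      show ?thesis using hA_inj[OF q0 ss b a'] .
    next
      case False
      then show ?thesis using en en1 hA_inj[OF q0 ss] unfolding selA_def zq_eq_iff[OF q0] by simp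
    qed
    then show "j = j'" using iei unfolding i_def i'_def s_def s'_def by (metis div_mult_mod_eq)
  qed
  show "\<And>j. Suc j < q^(Suc (Suc n)) \<Longrightarrow> lee_dist q (Suc (Suc n)) (extc q n G j) (extc q n G (Suc j)) = 1"
  proof -
    fix j assume j: "Suc j < q^(Suc (Suc n))"
    define i where "i = j div q^2"
    define s where "s = j mod q^2"
    define t where "t = i div Q"
    have i: "i < q^n" using jdiv j unfolding i_def by simp
    have ld: "lee_dist q (Suc (Suc n)) (extc q n G j) (extc q n G (Suc j)) =
       lee_dist q n (G i) (G (Suc j div q^2)) +
       lee_coord q (zq q (fst (yA q n i) + fst (selA q n i s))) (zq q (fst (yA q n (Suc j div q^2)) + fst (selA q n (Suc j div q^2) (Suc j mod q^2)))) +
       lee_coord q (zq q (snd (yA q n i) + snd (selA q n i s))) (zq q (snd (yA q n (Suc j div q^2)) + snd (selA q n (Suc j div q^2) (Suc j mod q^2))))"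
    proof -
      have "lee_dist q n (extc q n G j) (extc q n G (Suc j)) = lee_dist q n (G i) (G (Suc j div q^2))"
        by (rule lee_dist_cong) (simp_all add: extc_def i_def)
      then show ?thesis unfolding lee_dist_SS by (simp add: extc_def i_def s_def)
    qed
    show "lee_dist q (Suc (Suc n)) (extc q n G j) (extc q n G (Suc j)) = 1"
    proof (cases "Suc j mod q^2 = 0")
      case False
      have d: "Suc j div q^2 = i" and m: "Suc j mod q^2 = Suc s"
      proof -
        have ne: "Suc (j mod q^2) \<noteq> q^2" using False mod_Suc[of j "q^2"] by auto
        show "Suc j div q^2 = i" unfolding i_def using False by (simp add: div_Suc)
        show "Suc j mod q^2 = Suc s" unfolding s_def using ne by (simp add: mod_Suc)
      qed
      show ?thesis unfolding ld d m lee_dist_same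
        using hA_pair[OF q2] rA_pair[OF q2] unfolding selA_def by simp
    next
      case True
      then have d: "Suc j div q^2 = Suc i" unfolding i_def by (simp add: div_Suc)
      have sl: "s = q^2 - 1"
      proof -
        have "Suc (j mod q^2) = q^2" using True mod_Suc[of j "q^2"] by (auto split: if_splits)
        then show ?thesis unfolding s_def by simp
      qed
      have sj: "Suc i * q^2 = Suc j" using div_mult_mod_eq[of "Suc j" "q^2"] True d by simp
      have "Suc i * q^2 < q^n * q^2" using j unfolding sj qSSn by (simp add: mult.commute)
      then have si: "Suc i < q^n" by (simp only: mult_less_cancel2)
      have g: "lee_dist q n (G i) (G (Suc i)) = 1" using stG[of i] si by simp
      have a0: "selA q n (Suc i) 0 = (0,0)" unfolding selA_def using hA_0 rA_0 by simp
      have c: "zq q (fst (yA q n i) + fst (selA q n i s)) = zq q (fst (yA q n (Suc i)))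
             \<and> zq q (snd (yA q n i) + snd (selA q n i s)) = zq q (snd (yA q n (Suc i)))"
      proof (cases "Suc i mod Q = 0")
        case True
        then have tt: "Suc i div Q = Suc t" unfolding t_def by (simp add: div_Suc)
        have "selA q n i s = (1 - int q, 0)" unfolding selA_def sl using True rA_last[OF q0] Q_def by simp
        then show ?thesis unfolding yA_def Q_def[symmetric] tt t_def[symmetric] zq_eq_iff[OF q0]
          using mod_add_self2[of "int t + 1 - int q" "int q"] by (simp add: algebra_simps)
      next
        case False
        then have tt: "Suc i div Q = t" unfolding t_def by (simp add: div_Suc)
        have "selA q n i s = (0, int q - 1)" unfolding selA_def sl using False hA_last[OF q0] Q_def by simp
        then show ?thesis unfolding yA_def Q_def[symmetric] tt t_def[symmetric] zq_eq_iff[OF q0]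
          using mod_add_self2[of "int t - int i - 1" "int q"] by (simp add: algebra_simps)
      qed
      show ?thesis unfolding ld d True a0 using g c lee_same by simp
    qed
  qed
  show "\<And>j. j < q^(Suc (Suc n)) \<Longrightarrow> extc q n G ((j + q^(Suc (Suc n) - 1)) mod q^(Suc (Suc n))) = add_ones q (Suc (Suc n)) (extc q n G j)"
  proof -
    fix j assume j: "j < q^(Suc (Suc n))"
    define i where "i = j div q^2"
    define s where "s = j mod q^2"
    define t where "t = i div Q"
    define i' where "i' = (i + Q) mod q^n"
    define j' where "j' = (j + q^(Suc (Suc n) - 1)) mod q^(Suc (Suc n))"
    have i: "i < q^n" using jdiv j unfolding i_def by simp
    have "j' = q^2 * ((j + Q * q^2) div q^2 mod q^n) + (j + Q * q^2) mod q^2"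
      unfolding j'_def qSSn using qSn by (simp add: mod_mult2_eq)
    also have "\<dots> = q^2 * i' + s" unfolding i'_def i_def s_def using q0 by (simp add: add.commute)
    finally have je: "j' = q^2 * i' + s" .
    have i'lt: "i' < q^n" unfolding i'_def using q0 by simp
    have s2: "s < q^2" unfolding s_def using q0 by simp
    have dj: "j' div q^2 = i'" and mj: "j' mod q^2 = s" unfolding je using s2 q0 by simp_all
    have "i' = Q * ((i + Q) div Q mod q) + (i + Q) mod Q" unfolding i'_def qn by (simp only: mult.commute[of q Q] mod_mult2_eq)
    also have "\<dots> = Q * ((t + 1) mod q) + i mod Q" unfolding t_def using Q0 by (simp add: div_add_self2)
    finally have ie: "i' = Q * ((t + 1) mod q) + i mod Q" .
    have tt: "i' div Q = (t + 1) mod q" and im: "i' mod Q = i mod Q" unfolding ie using Q0 by simp_all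
    have bsame: "Suc i' mod Q = Suc i mod Q" by (metis im mod_Suc_eq)
    have sel: "selA q n i' s = selA q n i s" unfolding selA_def Q_def[symmetric] bsame ..
    have iq: "i' mod q = i mod q"
    proof -
      obtain R where R: "Q = q * R" using qdvdQ by blast
      have "i' mod q = (i mod Q) mod q" unfolding ie R by (simp add: mult.assoc)
      also have "\<dots> = i mod q" unfolding R by (simp add: mod_mod_cancel)
      finally show ?thesis .
    qed
    have iqz: "int i' mod int q = int i mod int q" using iq by (metis of_nat_mod)
    have tqz: "int (i' div Q) mod int q = (int t + 1) mod int q" unfolding tt by (simp add: zmod_int add.commute)
    have Gs: "G i' = add_ones q n (G i)" using shG[OF i] unfolding i'_def Q_def .
    have e0: "(fst (yA q n i') + fst (selA q n i' s)) mod int q = (fst (yA q n i) + fst (selA q n i s) + 1) mod int q"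
    proof -
      have "(int (i' div Q) + fst (selA q n i s)) mod int q = (int t + 1 + fst (selA q n i s)) mod int q"
        by (rule mod_add_cong[OF tqz refl])
      then show ?thesis unfolding sel yA_def Q_def[symmetric] t_def[symmetric] by (simp add: ac_simps)
    qed
    have e1: "(snd (yA q n i') + snd (selA q n i' s)) mod int q = (snd (yA q n i) + snd (selA q n i s) + 1) mod int q"
    proof -
      have "(snd (yA q n i') + snd (selA q n i' s)) mod int q = (int (i' div Q) - int i' + snd (selA q n i s)) mod int q"
        unfolding sel yA_def Q_def[symmetric] by simp
      also have "\<dots> = ((int t + 1) - int i + snd (selA q n i s)) mod int q"
        by (rule cong3[OF tqz iqz])
      finally show ?thesis unfolding yA_def Q_def[symmetric] t_def[symmetric] by (simp add: algebra_simps)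
    qed
    show "extc q n G j' = add_ones q (Suc (Suc n)) (extc q n G j)"
    proof (rule HOL.ext)
      fix p
      show "extc q n G j' p = add_ones q (Suc (Suc n)) (extc q n G j) p"
      proof -
        have z0: "zq q (fst (yA q n i') + fst (selA q n i' s)) = (zq q (fst (yA q n i) + fst (selA q n i s)) + 1) mod q"
          by (rule zq_shift[OF q0 e0])
        have z1: "zq q (snd (yA q n i') + snd (selA q n i' s)) = (zq q (snd (yA q n i) + snd (selA q n i s)) + 1) mod q"
          by (rule zq_shift[OF q0 e1])
        have gp: "p < n \<Longrightarrow> G i' p = (G i p + 1) mod q" using Gs unfolding add_ones_def by simp
        show ?thesis
        proof (cases "p < n")
          case True
          then show ?thesis using gp unfolding extc_def dj mj i_def[symmetric] add_ones_def by simp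
        next
          case False
          then show ?thesis using z0 z1 unfolding extc_def dj mj i_def[symmetric] s_def[symmetric] add_ones_def
            by simp
        qed
      qed
    qed
  qed
qed


fun code :: "nat \<Rightarrow> nat \<Rightarrow> nat \<Rightarrow> nat \<Rightarrow> nat" where
  "code q 0 = code0 q"
| "code q (Suc k) = extc q (2 * k + 2) (code q k)"

lemma code_qc: assumes q: "q \<ge> 3" shows "quasi_complementary_lee_gray_code q (2 * k + 2) (code q k)"
proof (induction k)
  case 0
  then show ?case using code0_qc[OF q] by (simp add: numeral_2_eq_2)
next
  case (Suc k)
  have "quasi_complementary_lee_gray_code q (Suc (Suc (2 * k + 2))) (extc q (2 * k + 2) (code q k))"
    by (rule ext_qc[OF q _ Suc.IH]) simp
  moreover have "Suc (Suc (2 * k + 2)) = 2 * Suc k + 2" by simp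
  ultimately show ?case by simp
qed

theorem corollary1:
  fixes q n :: nat
  assumes "q \<ge> 3" and "n > 0" and "even n"
  shows "\<exists>G. quasi_complementary_lee_gray_code q n G"
proof -
  obtain m where m: "n = 2 * m" using assms(3) by blast
  then have "m \<ge> 1" using assms(2) by simp
  then have "n = 2 * (m - 1) + 2" using m by simp
  then show ?thesis using code_qc[OF assms(1), of "m - 1"] by metis
qed

end
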